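(* Let $\mathcal R$ be a reaction network and let $\mathcal U=\mathcal U_1\cup\mathcal U_2\subseteq\mathcal S$ be a set of non-interacting species with $\mathcal U_1\cap\mathcal U_2=\emptyset$. Assume $\mathcal U_1$ is eliminable in $\mathcal R$ with respect to some $\mathcal F_1\subseteq\mathcal R_{\mathcal U_1}$, and that $\mathcal U_2$ is eliminable in the reduced network $\widetilde{\mathcal R}=\mathcal R^*_{\mathcal U_1,\mathcal F_1}$ with respect to $\mathcal F_2=\widetilde{\mathcal R}_{\mathcal U_2}$. Then $\mathcal U$ is eliminable in $\mathcal R$ with respect to $\mathcal F=\mathcal F_1\cup\mathcal R_{\mathcal U_2}$.
   Context: Species $S_1,\dots,S_n$ are the unit vectors of $\mathbb{N}_0^n$ and $\mathcal S=\{S_1,\dots,S_n\}$; for $x\in\mathbb{N}_0^n$, $\mathrm{supp}(x)=\{S_k: x^k>0\}$. A reaction network (RN) is a (possibly infinite) subset $\mathcal R\subseteq\mathbb{N}_0^n\times\mathbb{N}_0^n$ containing no $(y,y')$ with $y=y'$; elements $(y,y')$ are reactions $y\to y'$ with reactant $y$ and product $y'$. For $r_1=(y_1,y_1'),\ r_2=(y_2,y_2')$ define $r_1\oplus r_2=(y_1+0\vee(y_2-y_1'),\ y_2'+0\vee(y_1'-y_2))$ ($\vee$ componentwise maximum); it is associative. $\mathrm{cl}(A)$ is the set of all finite $\oplus$-sums of elements of $A$, including $(0,0)$. $(y_1,y_1')\sim(0,0)$ means $y_1=y_1'$. For $\mathcal U\subseteq\mathcal S$ and a set $B\subseteq\mathbb{N}_0^n\times\mathbb{N}_0^n$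 write $B_{\mathcal U}=\{(y,y')\in B:\mathrm{supp}(y)\cap\mathcal U\neq\emptyset\}$ and $B_{\mathcal U}'=\{(y,y')\in B:\mathrm{supp}(y')\cap\mathcal U\neq\emptyset\}$. For an RN $\mathcal R$ and $\mathcal U$, set $\overline{\mathcal R}=\mathrm{cl}(\mathcal R)$, $\mathcal R_0=\mathcal R\setminus(\mathcal R_{\mathcal U}\cup\mathcal R_{\mathcal U}')$ and $\overline{\mathcal R}_0=\overline{\mathcal R}\setminus(\overline{\mathcal R}_{\mathcal U}\cup\overline{\mathcal R}_{\mathcal U}')$. $\mathcal U$ is eliminable in $\mathcal R$ with respect to $\mathcal F\subseteq\mathcal R_{\mathcal U}$ if for every $r_0\in\mathcal R_{\mathcal U}'$ and every $r_1\in\mathrm{cl}(\mathcal F)$ with $r_0\oplus r_1\notin\overline{\mathcal R}_{\mathcal U}$ there exists $r_2\in\mathrm{cl}(\mathcal F)$ with $r_0\oplus r_1\oplus r_2\in\overline{\mathcal R}_0$. In that case the reduced RN is $\mathcal R^*_{\mathcal U,\mathcal F}=\mathcal R_0\cup\mathcal R_{\mathcal U,\mathcal F}$, where $\mathcal R_{\mathcal U,\mathcal F}=\{r_0\oplus r_1\in\overline{\mathcal R}_0: r_0\in\mathcal R_{\mathcal U}',\ r_1\in\mathrm{cl}(\mathcal F)\}\setminus\{r: r\sim(0,0)\}$. $\mathcal U$ consists of non-interacting species (in $\mathcal R$) if for every reaction $y\to y'\in\mathcal R$, $\sum_{S_i\in\mathcal U}y^i\le1$ and $\sum_{S_i\in\mathcal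 U}(y')^i\le1$. *)

theory Defs
  imports Main
begin

text \<open>Species are indexed by a finite type 'n (so n = CARD('n)); a complex is a
vector in N_0^n, represented as a function 'n => nat.  A reaction is a pair
(reactant, product).\<close>

type_synonym 'n complex = "'n \<Rightarrow> nat"
type_synonym 'n reaction = "'n complex \<times> 'n complex"

definition supp :: "'n complex \<Rightarrow> 'n set" where
  "supp x = {k. x k > 0}"

definition is_RN :: "'n reaction set \<Rightarrow> bool" where
  "is_RN R \<longleftrightarrow> (\<forall>(y, y') \<in> R. y \<noteq> y')"

text \<open>r1 (+) r2 = (y1 + 0 v (y2 - y1'), y2' + 0 v (y1' - y2)); truncated nat subtraction
is exactly 0 v (a - b).\<close>
definition oplus :: "'n reaction \<Rightarrow> 'n reaction \<Rightarrow> 'n reaction" where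
  "oplus r1 r2 = (\<lambda>k. fst r1 k + (fst r2 k - snd r1 k), \<lambda>k. snd r2 k + (snd r1 k - fst r2 k))"

definition zero_reaction :: "'n reaction" where
  "zero_reaction = ((\<lambda>_. 0), (\<lambda>_. 0))"

definition cl :: "'n reaction set \<Rightarrow> 'n reaction set" where
  "cl A = {foldl oplus zero_reaction xs | xs. set xs \<subseteq> A}"

definition sim0 :: "'n reaction \<Rightarrow> bool" where
  "sim0 r \<longleftrightarrow> fst r = snd r"

definition reac_U :: "'n reaction set \<Rightarrow> 'n set \<Rightarrow> 'n reaction set" where
  "reac_U B U = {(y, y') \<in> B. supp y \<inter> U \<noteq> {}}"

definition prod_U :: "'n reaction set \<Rightarrow> 'n set \<Rightarrow> 'n reaction set" where
  "prod_U B U = {(y, y') \<in> B. supp y' \<inter> U \<noteq> {}}"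

definition zero_part :: "'n reaction set \<Rightarrow> 'n set \<Rightarrow> 'n reaction set" where
  "zero_part B U = B - (reac_U B U \<union> prod_U B U)"

text \<open>U is eliminable in R with respect to F (F \<subseteq> R_U is a separate hypothesis).\<close>
definition eliminable :: "'n reaction set \<Rightarrow> 'n set \<Rightarrow> 'n reaction set \<Rightarrow> bool" where
  "eliminable R U F \<longleftrightarrow>
     (\<forall>r0 \<in> prod_U R U. \<forall>r1 \<in> cl F.
        oplus r0 r1 \<notin> reac_U (cl R) U \<longrightarrow>
        (\<exists>r2 \<in> cl F. oplus (oplus r0 r1) r2 \<in> zero_part (cl R) U))"

definition reduced :: "'n reaction set \<Rightarrow> 'n set \<Rightarrow> 'n reaction set \<Rightarrow> 'n reaction set" where
  "reduced R U F = zero_part R U \<union>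
     ({r. \<exists>r0 \<in> prod_U R U. \<exists>r1 \<in> cl F. r = oplus r0 r1 \<and> r \<in> zero_part (cl R) U}
      - {r. sim0 r})"

definition non_interacting :: "'n reaction set \<Rightarrow> 'n set \<Rightarrow> bool" where
  "non_interacting R U \<longleftrightarrow>
     (\<forall>(y, y') \<in> R. (\<Sum>i\<in>U. y i) \<le> 1 \<and> (\<Sum>i\<in>U. y' i) \<le> 1)"

end

theory Submission
  imports Defs
begin

lemma oplus_fst[simp]: "fst (oplus a b) k = fst a k + (fst b k - snd a k)"
  by (simp add: oplus_def)
lemma oplus_snd[simp]: "snd (oplus a b) k = snd b k + (snd a k - fst b k)"
  by (simp add: oplus_def)

lemma reaction_eqI: "(\<And>k. fst a k = fst b k) \<Longrightarrow> (\<And>k. snd a k = snd b k) \<Longrightarrow> a = (b::'n reaction)"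
  by (metis ext prod.expand)

lemma oplus_assoc: "oplus (oplus a b) c = oplus a (oplus b c)"
proof (rule reaction_eqI)
  fix k
  show "fst (oplus (oplus a b) c) k = fst (oplus a (oplus b c)) k" by simp
  show "snd (oplus (oplus a b) c) k = snd (oplus a (oplus b c)) k" by simp
qed

lemma zero_fst[simp]: "fst zero_reaction k = 0" and zero_snd[simp]: "snd zero_reaction k = 0"
  by (simp_all add: zero_reaction_def)

lemma oplus_zero_right[simp]: "oplus r zero_reaction = r"
  by (rule reaction_eqI) simp_all
lemma oplus_zero_left[simp]: "oplus zero_reaction r = r"
  by (rule reaction_eqI) simp_all

lemma foldl_oplus: "foldl oplus (oplus a b) xs = oplus a (foldl oplus b xs)"
  by (induction xs arbitrary: b) (simp_all add: oplus_assoc)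

lemma foldl_oplus0: "foldl oplus a xs = oplus a (foldl oplus zero_reaction xs)"
  using foldl_oplus[of a zero_reaction xs] by simp

lemma zero_cl[simp]: "zero_reaction \<in> cl A"
  unfolding cl_def by (rule CollectI, rule exI[of _ "[]"]) simp

lemma cl_single: "a \<in> A \<Longrightarrow> a \<in> cl A"
  unfolding cl_def by (rule CollectI, rule exI[of _ "[a]"]) simp

lemma cl_oplus: assumes "a \<in> cl A" "b \<in> cl A" shows "oplus a b \<in> cl A"
proof -
  obtain xs where xs: "a = foldl oplus zero_reaction xs" "set xs \<subseteq> A" using assms(1) unfolding cl_def by blast
  obtain ys where ys: "b = foldl oplus zero_reaction ys" "set ys \<subseteq> A" using assms(2) unfolding cl_def by blast
  have "oplus a b = foldl oplus zero_reaction (xs @ ys)"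
    using xs ys by (simp add: foldl_oplus0[of "foldl oplus zero_reaction xs" ys])
  then show ?thesis unfolding cl_def using xs ys
    by (intro CollectI exI[of _ "xs @ ys"]) auto
qed

lemma cl_induct[consumes 1]:
  assumes "r \<in> cl A" "P zero_reaction" "\<And>a b. P a \<Longrightarrow> b \<in> A \<Longrightarrow> P (oplus a b)"
  shows "P r"
proof -
  obtain xs where xs: "r = foldl oplus zero_reaction xs" "set xs \<subseteq> A" using assms(1) unfolding cl_def by blast
  have "set xs \<subseteq> A \<Longrightarrow> P (foldl oplus zero_reaction xs)"
    by (induction xs rule: rev_induct) (auto intro: assms(2,3))
  then show ?thesis using xs by simp
qed

lemma cl_cl: assumes "A \<subseteq> cl B" shows "cl A \<subseteq> cl B"
proof
  fix r assume "r \<in> cl A" then show "r \<in> cl B"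
    by (induct rule: cl_induct) (use assms in \<open>auto intro: cl_oplus\<close>)
qed

lemma cl_mono: "A \<subseteq> B \<Longrightarrow> cl A \<subseteq> cl B"
  by (rule cl_cl) (auto intro: cl_single)

lemma cl_fst0: "r \<in> cl A \<Longrightarrow> (\<And>a. a \<in> A \<Longrightarrow> fst a k = 0) \<Longrightarrow> fst r k = 0"
  by (induct rule: cl_induct) auto
lemma cl_snd0: "r \<in> cl A \<Longrightarrow> (\<And>a. a \<in> A \<Longrightarrow> snd a k = 0) \<Longrightarrow> snd r k = 0"
  by (induct rule: cl_induct) auto

lemma supp_disj: "supp y \<inter> V = {} \<longleftrightarrow> (\<forall>k\<in>V. y k = 0)"
  by (auto simp: supp_def)

lemma reac_U_iff: "r \<in> reac_U B V \<longleftrightarrow> r \<in> B \<and> (\<exists>k\<in>V. fst r k > 0)"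
  by (cases r) (auto simp: reac_U_def supp_def)
lemma prod_U_iff: "r \<in> prod_U B V \<longleftrightarrow> r \<in> B \<and> (\<exists>k\<in>V. snd r k > 0)"
  by (cases r) (auto simp: prod_U_def supp_def)
lemma zero_part_iff: "r \<in> zero_part B V \<longleftrightarrow> r \<in> B \<and> (\<forall>k\<in>V. fst r k = 0) \<and> (\<forall>k\<in>V. snd r k = 0)"
  by (auto simp: zero_part_def reac_U_iff prod_U_iff)

lemma unit_sum:
  fixes g :: "'a \<Rightarrow> nat"
  assumes "finite V" "sum g V \<le> 1"
  shows "(\<forall>k\<in>V. g k = 0) \<or> (\<exists>u\<in>V. \<forall>k\<in>V. g k = (if k = u then 1 else 0))"
proof (cases "\<forall>k\<in>V. g k = 0")
  case False
  then obtain u where u: "u \<in> V" "g u > 0" by auto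
  have s: "sum g V = g u + sum g (V - {u})" using assms(1) u(1) by (simp add: sum.remove)
  then have "g u = 1" "sum g (V - {u}) = 0" using assms(2) u(2) by auto
  then have "\<forall>k\<in>V. g k = (if k = u then 1 else 0)" using assms(1) by auto
  then show ?thesis using u by blast
qed simp

locale pf =
  fixes R F1 :: "('n::finite) reaction set" and U1 U2 :: "'n set"
  assumes ni: "non_interacting R (U1 \<union> U2)" and disj: "U1 \<inter> U2 = {}"
    and F1R: "F1 \<subseteq> reac_U R U1"
begin

abbreviation "U \<equiv> U1 \<union> U2"
abbreviation "Rt \<equiv> reduced R U1 F1"
abbreviation "F \<equiv> F1 \<union> reac_U R U2"

lemma ni_fst: "r \<in> R \<Longrightarrow> (\<forall>k\<in>U. fst r k = 0) \<or> (\<exists>u\<in>U. \<forall>k\<in>U. fst r k = (if k = u then 1 else 0))"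
proof -
  assume r: "r \<in> R"
  have "sum (%k. fst r k) U \<le> 1" using ni r unfolding non_interacting_def by (cases r) auto
  then show ?thesis using unit_sum[of U "%k. fst r k"] by simp
qed
lemma ni_snd: "r \<in> R \<Longrightarrow> (\<forall>k\<in>U. snd r k = 0) \<or> (\<exists>u\<in>U. \<forall>k\<in>U. snd r k = (if k = u then 1 else 0))"
proof -
  assume r: "r \<in> R"
  have "sum (%k. snd r k) U \<le> 1" using ni r unfolding non_interacting_def by (cases r) auto
  then show ?thesis using unit_sum[of U "%k. snd r k"] by simp
qed

lemma F_R: "F \<subseteq> R" using F1R by (auto simp: reac_U_iff)

lemma reac_unit: assumes "r \<in> R" "k0 \<in> V" "V \<subseteq> U" "fst r k0 > 0"
  shows "\<forall>k\<in>U. fst r k = (if k = k0 then 1 else 0)"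
proof -
  from ni_fst[OF assms(1)] assms obtain u where "u \<in> U" "\<forall>k\<in>U. fst r k = (if k = u then 1 else 0)"
    by force
  moreover then have "u = k0" using assms by (cases "u = k0") auto
  ultimately show ?thesis by simp
qed

lemma prod_unit: assumes "r \<in> R" "k0 \<in> V" "V \<subseteq> U" "snd r k0 > 0"
  shows "\<forall>k\<in>U. snd r k = (if k = k0 then 1 else 0)"
proof -
  from ni_snd[OF assms(1)] assms obtain u where "u \<in> U" "\<forall>k\<in>U. snd r k = (if k = u then 1 else 0)"
    by force
  moreover then have "u = k0" using assms by (cases "u = k0") auto
  ultimately show ?thesis by simp
qed

lemma F_fst: "f \<in> F \<Longrightarrow> \<exists>u\<in>U. \<forall>k\<in>U. fst f k = (if k = u then 1 else 0)"
proof -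
  assume f: "f \<in> F"
  then have "f \<in> reac_U R U1 \<or> f \<in> reac_U R U2" using F1R by blast
  then obtain k0 where "k0 \<in> U" "fst f k0 > 0" "f \<in> R" unfolding reac_U_iff by blast
  then show ?thesis using reac_unit[of f k0 U] by blast
qed

lemma F1_fst: "f \<in> F1 \<Longrightarrow> \<exists>u\<in>U1. \<forall>k\<in>U. fst f k = (if k = u then 1 else 0)"
proof -
  assume f: "f \<in> F1"
  then have "f \<in> reac_U R U1" using F1R by blast
  then obtain k0 where "k0 \<in> U1" "fst f k0 > 0" "f \<in> R" unfolding reac_U_iff by blast
  then show ?thesis using reac_unit[of f k0 U1] by blast
qed

lemma F1_fstU2: "f \<in> F1 \<Longrightarrow> k \<in> U2 \<Longrightarrow> fst f k = 0"
proof -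
  assume "f \<in> F1" "k \<in> U2"
  then obtain u where "u \<in> U1" "\<forall>k\<in>U. fst f k = (if k = u then 1 else 0)" using F1_fst by blast
  moreover have "k \<noteq> u" using \<open>u \<in> U1\<close> \<open>k \<in> U2\<close> disj by blast
  ultimately show ?thesis using \<open>k \<in> U2\<close> by simp
qed

lemma clF1_fstU2: "r \<in> cl F1 \<Longrightarrow> k \<in> U2 \<Longrightarrow> fst r k = 0"
  using cl_fst0[of r F1 k] F1_fstU2[of _ k] by simp

lemma F1_R: "F1 \<subseteq> R" using F_R by blast
lemma clF1_clR: "cl F1 \<subseteq> cl R" using F1_R by (rule cl_mono)
lemma clF_clR: "cl F \<subseteq> cl R" using F_R by (rule cl_mono)
lemma clF1_clF: "cl F1 \<subseteq> cl F" by (rule cl_mono) blast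

lemma Rt_U1: "r \<in> Rt \<Longrightarrow> k \<in> U1 \<Longrightarrow> fst r k = 0 \<and> snd r k = 0"
  unfolding reduced_def by (auto simp: zero_part_iff)

lemma clRt_U1: "r \<in> cl Rt \<Longrightarrow> k \<in> U1 \<Longrightarrow> fst r k = 0 \<and> snd r k = 0"
proof -
  assume a: "r \<in> cl Rt" "k \<in> U1"
  have "fst r k = 0" using a(1) by (rule cl_fst0) (use Rt_U1 a(2) in blast)
  moreover have "snd r k = 0" using a(1) by (rule cl_snd0) (use Rt_U1 a(2) in blast)
  ultimately show ?thesis by simp
qed

lemma Rt_clR: "Rt \<subseteq> cl R"
  unfolding reduced_def by (auto simp: zero_part_iff intro: cl_single)

lemma zpR_Rt: "zero_part R U1 \<subseteq> Rt" unfolding reduced_def by auto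

lemma blk_Rt: "r0 \<in> prod_U R U1 \<Longrightarrow> r1 \<in> cl F1 \<Longrightarrow> oplus r0 r1 \<in> zero_part (cl R) U1
   \<Longrightarrow> \<not> sim0 (oplus r0 r1) \<Longrightarrow> oplus r0 r1 \<in> Rt"
  unfolding reduced_def by blast

lemma RtU2_clF: "reac_U Rt U2 \<subseteq> cl F"
proof
  fix x assume x: "x \<in> reac_U Rt U2"
  then obtain k where k: "k \<in> U2" "fst x k > 0" "x \<in> Rt" by (auto simp: reac_U_iff)
  show "x \<in> cl F"
  proof (cases "x \<in> zero_part R U1")
    case True
    then have "x \<in> reac_U R U2" using k by (auto simp: zero_part_iff reac_U_iff)
    then show ?thesis by (auto intro: cl_single)
  next
    case False
    then obtain r0 r1 where r: "r0 \<in> prod_U R U1" "r1 \<in> cl F1" "x = oplus r0 r1"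
      using k(3) unfolding reduced_def by blast
    have "fst r1 k = 0" using clF1_fstU2 r(2) k(1) by blast
    then have "fst r0 k > 0" using k r by simp
    then have "r0 \<in> reac_U R U2" using r k by (auto simp: reac_U_iff prod_U_iff)
    then have "r0 \<in> cl F" by (auto intro: cl_single)
    moreover have "r1 \<in> cl F" using r(2) clF1_clF by blast
    ultimately show ?thesis using r(3) cl_oplus by blast
  qed
qed

end

context pf begin

definition P2 :: "'n \<Rightarrow> bool" where
  "P2 v \<longleftrightarrow> (\<exists>r0\<in>prod_U Rt U2. \<exists>r1\<in>cl (reac_U Rt U2).
     (\<forall>k\<in>U2. fst (oplus r0 r1) k = 0) \<and> (\<forall>k\<in>U2. snd (oplus r0 r1) k = (if k = v then 1 else 0)))"

definition Blk :: "'n \<Rightarrow> bool" where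
  "Blk u \<longleftrightarrow> (\<exists>r0\<in>prod_U R U1. \<exists>r1\<in>cl F1.
     (\<forall>k\<in>U1. fst (oplus r0 r1) k = 0) \<and> (\<forall>k\<in>U. snd (oplus r0 r1) k = (if k = u then 1 else 0)) \<and>
     ((\<forall>k\<in>U2. fst (oplus r0 r1) k = 0) \<or>
      (\<exists>w\<in>U2. (\<forall>k\<in>U2. fst (oplus r0 r1) k = (if k = w then 1 else 0)) \<and> P2 w)))"

definition Inv :: "'n reaction \<Rightarrow> bool" where
  "Inv s \<longleftrightarrow> (\<forall>k\<in>U. snd s k = 0) \<or>
     (\<exists>u\<in>U1. (\<forall>k\<in>U. snd s k = (if k = u then 1 else 0)) \<and> Blk u) \<or>
     (\<exists>v\<in>U2. (\<forall>k\<in>U. snd s k = (if k = v then 1 else 0)) \<and> P2 v)"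

lemma BlkI:
  assumes "r0 \<in> prod_U R U1" "r1 \<in> cl F1" "\<forall>k\<in>U1. fst (oplus r0 r1) k = 0"
    "\<forall>k\<in>U. snd (oplus r0 r1) k = (if k = u then 1 else 0)"
    "(\<forall>k\<in>U2. fst (oplus r0 r1) k = 0) \<or>
      (\<exists>w\<in>U2. (\<forall>k\<in>U2. fst (oplus r0 r1) k = (if k = w then 1 else 0)) \<and> P2 w)"
  shows "Blk u"
  unfolding Blk_def using assms by blast

lemma P2I:
  assumes "r0 \<in> prod_U Rt U2" "r1 \<in> cl (reac_U Rt U2)" "\<forall>k\<in>U2. fst (oplus r0 r1) k = 0"
    "\<forall>k\<in>U2. snd (oplus r0 r1) k = (if k = v then 1 else 0)"
  shows "P2 v"
  unfolding P2_def using assms by blast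

lemma P2_ext:
  assumes "P2 v" "f \<in> reac_U Rt U2" "\<forall>k\<in>U2. fst f k = (if k = v then 1 else 0)"
    "\<forall>k\<in>U2. snd f k = (if k = b then 1 else 0)"
  shows "P2 b"
proof -
  obtain r0 r1 where r: "r0 \<in> prod_U Rt U2" "r1 \<in> cl (reac_U Rt U2)"
    "\<forall>k\<in>U2. fst (oplus r0 r1) k = 0" "\<forall>k\<in>U2. snd (oplus r0 r1) k = (if k = v then 1 else 0)"
    using assms(1) unfolding P2_def by blast
  have c: "oplus r1 f \<in> cl (reac_U Rt U2)" using r(2) assms(2) by (blast intro: cl_oplus cl_single)
  have e: "oplus r0 (oplus r1 f) = oplus (oplus r0 r1) f" by (simp add: oplus_assoc)
  have "\<forall>k\<in>U2. fst (oplus r0 (oplus r1 f)) k = 0"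
    unfolding e using r(3,4) assms(3) by simp
  moreover have "\<forall>k\<in>U2. snd (oplus r0 (oplus r1 f)) k = (if k = b then 1 else 0)"
    unfolding e using r(3,4) assms(3,4) by simp
  ultimately show ?thesis unfolding P2_def using r(1) c by blast
qed

lemma step3:
  assumes v: "v \<in> U2" and sv: "\<forall>k\<in>U. snd s k = (if k = v then 1 else 0)" and p: "P2 v"
    and f: "f \<in> F" and le: "\<forall>k\<in>U. fst f k \<le> snd s k"
  shows "Inv (oplus s f)"
proof -
  obtain a where a: "a \<in> U" "\<forall>k\<in>U. fst f k = (if k = a then 1 else 0)" using F_fst f by blast
  have "a = v" using le a sv by (metis One_nat_def le_zero_eq zero_neq_one)
  with a have fv: "\<forall>k\<in>U. fst f k = (if k = v then 1 else 0)" by simp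
  have fR: "f \<in> R" using f F_R by blast
  have snd_sf: "\<forall>k\<in>U. snd (oplus s f) k = snd f k" using fv sv by simp
  have vU1: "v \<notin> U1" using v disj by blast
  from ni_snd[OF fR] show ?thesis
  proof
    assume "\<forall>k\<in>U. snd f k = 0" then show ?thesis unfolding Inv_def using snd_sf by simp
  next
    assume "\<exists>b\<in>U. \<forall>k\<in>U. snd f k = (if k = b then 1 else 0)"
    then obtain b where b: "b \<in> U" "\<forall>k\<in>U. snd f k = (if k = b then 1 else 0)" by blast
    show ?thesis
    proof (cases "b \<in> U1")
      case True
      have "f \<in> prod_U R U1" using fR b True by (auto simp: prod_U_iff)
      moreover have "\<forall>k\<in>U1. fst (oplus f zero_reaction) k = 0" using fv vU1 by auto
      moreover have "\<forall>k\<in>U. snd (oplus f zero_reaction) k = (if k = b then 1 else 0)" using b by simp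
      moreover have "\<forall>k\<in>U2. fst (oplus f zero_reaction) k = (if k = v then 1 else 0)" using fv by simp
      ultimately have "Blk b" unfolding Blk_def using v p zero_cl by blast
      then show ?thesis unfolding Inv_def using True snd_sf b by auto
    next
      case False
      then have bU2: "b \<in> U2" using b by blast
      have "f \<in> zero_part R U1" using fR fv b vU1 False by (auto simp: zero_part_iff)
      then have "f \<in> Rt" using zpR_Rt by blast
      then have "f \<in> reac_U Rt U2" using fv v by (auto simp: reac_U_iff)
      then have "P2 b" using P2_ext[OF p] fv b by simp
      then show ?thesis unfolding Inv_def using bU2 snd_sf b by auto
    qed
  qed
qed

lemma step2:
  assumes u: "u \<in> U1" and su: "\<forall>k\<in>U. snd s k = (if k = u then 1 else 0)" and bl: "Blk u"
    and f: "f \<in> F" and le: "\<forall>k\<in>U. fst f k \<le> snd s k"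
  shows "Inv (oplus s f)"
proof -
  obtain a where a: "a \<in> U" "\<forall>k\<in>U. fst f k = (if k = a then 1 else 0)" using F_fst f by blast
  have "a = u" using le a su by (metis One_nat_def le_zero_eq zero_neq_one)
  with a have fu: "\<forall>k\<in>U. fst f k = (if k = u then 1 else 0)" by simp
  have uU2: "u \<notin> U2" using u disj by blast
  have fF1: "f \<in> F1"
  proof (rule ccontr)
    assume "f \<notin> F1"
    then have "f \<in> reac_U R U2" using f by blast
    then obtain k where "k \<in> U2" "fst f k > 0" by (auto simp: reac_U_iff)
    then show False using fu uU2 by (metis UnCI less_numeral_extra(3))
  qed
  have fR: "f \<in> R" using f F_R by blast
  have snd_sf: "\<forall>k\<in>U. snd (oplus s f) k = snd f k" using fu su by simp
  obtain r0 r1 where r: "r0 \<in> prod_U R U1" "r1 \<in> cl F1"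
     "\<forall>k\<in>U1. fst (oplus r0 r1) k = 0" "\<forall>k\<in>U. snd (oplus r0 r1) k = (if k = u then 1 else 0)"
     and pre: "(\<forall>k\<in>U2. fst (oplus r0 r1) k = 0) \<or>
      (\<exists>w\<in>U2. (\<forall>k\<in>U2. fst (oplus r0 r1) k = (if k = w then 1 else 0)) \<and> P2 w)"
    using bl unfolding Blk_def by blast
  define blk where "blk = oplus r0 (oplus r1 f)"
  have blk_eq: "blk = oplus (oplus r0 r1) f" unfolding blk_def by (simp add: oplus_assoc)
  have r1f: "oplus r1 f \<in> cl F1" using r(2) fF1 by (blast intro: cl_oplus cl_single)
  have bfst: "\<forall>k\<in>U. fst blk k = fst (oplus r0 r1) k" unfolding blk_eq using fu r(4) by simp
  have bsnd: "\<forall>k\<in>U. snd blk k = snd f k" unfolding blk_eq using fu r(4) by simp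
  have bfst1: "\<forall>k\<in>U1. fst blk k = 0" using bfst r(3) by simp
  have pre': "(\<forall>k\<in>U2. fst blk k = 0) \<or>
      (\<exists>w\<in>U2. (\<forall>k\<in>U2. fst blk k = (if k = w then 1 else 0)) \<and> P2 w)"
    using pre bfst by simp
  from ni_snd[OF fR] show ?thesis
  proof
    assume "\<forall>k\<in>U. snd f k = 0" then show ?thesis unfolding Inv_def using snd_sf by simp
  next
    assume "\<exists>b\<in>U. \<forall>k\<in>U. snd f k = (if k = b then 1 else 0)"
    then obtain b where b: "b \<in> U" "\<forall>k\<in>U. snd f k = (if k = b then 1 else 0)" by blast
    show ?thesis
    proof (cases "b \<in> U1")
      case True
      have "Blk b"
        by (rule BlkI[OF r(1) r1f], unfold blk_def[symmetric]) (use bfst1 bsnd b pre' in auto)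
      then show ?thesis unfolding Inv_def using True snd_sf b by auto
    next
      case False
      then have bU2: "b \<in> U2" using b by blast
      have r0R: "r0 \<in> R" using r(1) by (simp add: prod_U_iff)
      have "blk \<in> cl R" unfolding blk_def using r0R r1f clF1_clR by (blast intro: cl_oplus cl_single)
      moreover have "\<forall>k\<in>U1. snd blk k = 0" using bsnd b False by auto
      ultimately have "blk \<in> zero_part (cl R) U1"
        using bfst1 unfolding zero_part_iff by blast
      then have zp: "oplus r0 (oplus r1 f) \<in> zero_part (cl R) U1" by (simp only: blk_def)
      have bsnd2: "\<forall>k\<in>U2. snd blk k = (if k = b then 1 else 0)" using bsnd b by simp
      have "P2 b"
        using pre'
      proof
        assume z: "\<forall>k\<in>U2. fst blk k = 0"
        have "\<not> sim0 blk" using z bsnd2 bU2 unfolding sim0_def by (metis zero_neq_one)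
        then have "blk \<in> Rt" using blk_Rt[OF r(1) r1f zp] unfolding blk_def by simp
        then have "blk \<in> prod_U Rt U2" using bsnd2 bU2 by (auto simp: prod_U_iff)
        then show "P2 b" unfolding P2_def using z bsnd2 zero_cl by (metis oplus_zero_right)
      next
        assume "\<exists>w\<in>U2. (\<forall>k\<in>U2. fst blk k = (if k = w then 1 else 0)) \<and> P2 w"
        then obtain w where w: "w \<in> U2" "\<forall>k\<in>U2. fst blk k = (if k = w then 1 else 0)" "P2 w" by blast
        show "P2 b"
        proof (cases "sim0 blk")
          case True
          then have "fst blk w = snd blk w" unfolding sim0_def by simp
          then have "b = w" using w bsnd2 by (metis zero_neq_one)
          then show ?thesis using w by simp
        next
          case False
          then have "blk \<in> Rt" using blk_Rt[OF r(1) r1f zp] unfolding blk_def by simp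
          then have "blk \<in> reac_U Rt U2" using w by (auto simp: reac_U_iff)
          then show ?thesis using P2_ext[OF w(3)] w(2) bsnd2 by blast
        qed
      qed
      then show ?thesis unfolding Inv_def using bU2 snd_sf b by auto
    qed
  qed
qed

lemma step:
  assumes inv: "Inv s" and f: "f \<in> F" and h: "\<forall>k\<in>U. fst (oplus s f) k = 0"
  shows "Inv (oplus s f)"
proof -
  have le: "\<forall>k\<in>U. fst f k \<le> snd s k" using h by simp
  obtain a where a: "a \<in> U" "\<forall>k\<in>U. fst f k = (if k = a then 1 else 0)" using F_fst f by blast
  from inv show ?thesis unfolding Inv_def[of s]
  proof (elim disjE)
    assume "\<forall>k\<in>U. snd s k = 0"
    then have False using le a by (metis le_zero_eq zero_neq_one)
    then show ?thesis ..
  next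
    assume "\<exists>u\<in>U1. (\<forall>k\<in>U. snd s k = (if k = u then 1 else 0)) \<and> Blk u"
    then show ?thesis using step2 f le by blast
  next
    assume "\<exists>v\<in>U2. (\<forall>k\<in>U. snd s k = (if k = v then 1 else 0)) \<and> P2 v"
    then show ?thesis using step3 f le by blast
  qed
qed

lemma base:
  assumes r0: "r0 \<in> prod_U R U" and h: "\<forall>k\<in>U. fst r0 k = 0"
  shows "Inv r0"
proof -
  obtain b where b0: "b \<in> U" "snd r0 b > 0" "r0 \<in> R" using r0 by (auto simp: prod_U_iff)
  then have b: "\<forall>k\<in>U. snd r0 k = (if k = b then 1 else 0)" using prod_unit[of r0 b U] by blast
  show ?thesis
  proof (cases "b \<in> U1")
    case True
    have "r0 \<in> prod_U R U1" using b0 True by (auto simp: prod_U_iff)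
    then have "Blk b" 
      by (rule BlkI[OF _ zero_cl]) (use h b in simp_all)
    then show ?thesis unfolding Inv_def using True b by blast
  next
    case False
    then have bU2: "b \<in> U2" using b0 by blast
    have "r0 \<in> zero_part R U1" using b0 h b False by (auto simp: zero_part_iff)
    then have "r0 \<in> Rt" using zpR_Rt by blast
    then have "r0 \<in> prod_U Rt U2" using b bU2 by (auto simp: prod_U_iff)
    then have "P2 b"
      by (rule P2I[OF _ zero_cl]) (use h b in simp_all)
    then show ?thesis unfolding Inv_def using bU2 b by blast
  qed
qed

lemma chain:
  assumes r0: "r0 \<in> prod_U R U"
  shows "set xs \<subseteq> F \<Longrightarrow> \<forall>k\<in>U. fst (foldl oplus r0 xs) k = 0 \<Longrightarrow> Inv (foldl oplus r0 xs)"
proof (induction xs rule: rev_induct)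
  case Nil then show ?case using base r0 by simp
next
  case (snoc x xs)
  have "\<forall>k\<in>U. fst (foldl oplus r0 xs) k = 0" using snoc.prems(2) by simp
  then have "Inv (foldl oplus r0 xs)" using snoc by simp
  then show ?case using step snoc.prems by simp
qed

end

context pf begin

lemma finish_none:
  assumes "s \<in> cl R" "\<forall>k\<in>U. fst s k = 0" "\<forall>k\<in>U. snd s k = 0"
  shows "\<exists>r2\<in>cl F. oplus s r2 \<in> zero_part (cl R) U"
  using assms by (intro bexI[of _ zero_reaction]) (auto simp: zero_part_iff)

lemma finish2:
  assumes E2: "eliminable Rt U2 (reac_U Rt U2)" and sR: "s \<in> cl R" and hs: "\<forall>k\<in>U. fst s k = 0"
    and v: "v \<in> U2" and sv: "\<forall>k\<in>U. snd s k = (if k = v then 1 else 0)" and p: "P2 v"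
  shows "\<exists>r2\<in>cl F. oplus s r2 \<in> zero_part (cl R) U"
proof -
  obtain r0 r1 where r: "r0 \<in> prod_U Rt U2" "r1 \<in> cl (reac_U Rt U2)"
    "\<forall>k\<in>U2. fst (oplus r0 r1) k = 0" "\<forall>k\<in>U2. snd (oplus r0 r1) k = (if k = v then 1 else 0)"
    using p unfolding P2_def by blast
  have "oplus r0 r1 \<notin> reac_U (cl Rt) U2" using r(3) by (auto simp: reac_U_iff)
  then obtain r2 where r2: "r2 \<in> cl (reac_U Rt U2)" "oplus (oplus r0 r1) r2 \<in> zero_part (cl Rt) U2"
    using E2 r(1,2) unfolding eliminable_def by blast
  have a2: "\<forall>k\<in>U2. fst r2 k = (if k = v then 1 else 0) \<and> snd r2 k = 0"
  proof
    fix k assume k: "k \<in> U2"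
    have "fst (oplus (oplus r0 r1) r2) k = 0" "snd (oplus (oplus r0 r1) r2) k = 0"
      using r2(2) k by (auto simp: zero_part_iff)
    moreover have "fst (oplus (oplus r0 r1) r2) k = fst (oplus r0 r1) k + (fst r2 k - snd (oplus r0 r1) k)"
      by (rule oplus_fst)
    moreover have "snd (oplus (oplus r0 r1) r2) k = snd r2 k + (snd (oplus r0 r1) k - fst r2 k)"
      by (rule oplus_snd)
    moreover have "fst (oplus r0 r1) k = 0" "snd (oplus r0 r1) k = (if k = v then 1 else 0)"
      using r(3,4) k by (auto simp del: oplus_fst oplus_snd)
    ultimately show "fst r2 k = (if k = v then 1 else 0) \<and> snd r2 k = 0"
      by (cases "k = v") (simp_all del: oplus_fst oplus_snd)
  qed
  have "cl (reac_U Rt U2) \<subseteq> cl Rt" by (rule cl_mono) (auto simp: reac_U_iff)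
  then have a1: "\<forall>k\<in>U1. fst r2 k = 0 \<and> snd r2 k = 0" using r2(1) clRt_U1 by blast
  have r2F: "r2 \<in> cl F" using r2(1) cl_cl[OF RtU2_clF] by blast
  have "oplus s r2 \<in> cl R" using sR r2F clF_clR by (blast intro: cl_oplus)
  moreover have "\<forall>k\<in>U. fst (oplus s r2) k = 0" using hs sv a1 a2 by auto
  moreover have "\<forall>k\<in>U. snd (oplus s r2) k = 0"
  proof
    fix k assume k: "k \<in> U"
    show "snd (oplus s r2) k = 0"
    proof (cases "k \<in> U1")
      case True
      then have "k \<noteq> v" using v disj by blast
      then show ?thesis using True a1 sv k by simp
    next
      case False
      then show ?thesis using a2 sv k by auto
    qed
  qed
  ultimately have "oplus s r2 \<in> zero_part (cl R) U" unfolding zero_part_iff by blast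
  then show ?thesis using r2F by blast
qed

lemma fin:
  assumes E2: "eliminable Rt U2 (reac_U Rt U2)" and sR: "s \<in> cl R" and hs: "\<forall>k\<in>U. fst s k = 0"
    and inv: "Inv s" and n1: "\<forall>k\<in>U1. snd s k = 0"
  shows "\<exists>r2\<in>cl F. oplus s r2 \<in> zero_part (cl R) U"
  using inv unfolding Inv_def
proof (elim disjE)
  assume "\<forall>k\<in>U. snd s k = 0" then show ?thesis using finish_none sR hs by blast
next
  assume "\<exists>u\<in>U1. (\<forall>k\<in>U. snd s k = (if k = u then 1 else 0)) \<and> Blk u"
  then obtain u where "u \<in> U1" "snd s u = 1" by auto
  then show ?thesis using n1 by simp
next
  assume "\<exists>v\<in>U2. (\<forall>k\<in>U. snd s k = (if k = v then 1 else 0)) \<and> P2 v"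
  then show ?thesis using finish2[OF E2 sR hs] by blast
qed

lemma main:
  assumes E1: "eliminable R U1 F1" and E2: "eliminable Rt U2 (reac_U Rt U2)"
    and r0: "r0 \<in> prod_U R U" and r1: "r1 \<in> cl F" and nr: "oplus r0 r1 \<notin> reac_U (cl R) U"
  shows "\<exists>r2\<in>cl F. oplus (oplus r0 r1) r2 \<in> zero_part (cl R) U"
proof -
  obtain xs where xs: "r1 = foldl oplus zero_reaction xs" "set xs \<subseteq> F" using r1 unfolding cl_def by blast
  define s where "s = oplus r0 r1"
  have s_eq: "s = foldl oplus r0 xs" unfolding s_def xs(1) by (simp add: foldl_oplus0[of r0 xs])
  have r0R: "r0 \<in> R" using r0 by (simp add: prod_U_iff)
  have sR: "s \<in> cl R" unfolding s_def using r0R r1 clF_clR by (blast intro: cl_oplus cl_single)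
  have "s \<notin> reac_U (cl R) U" using nr s_def by simp
  then have hs: "\<forall>k\<in>U. fst s k = 0" using sR by (auto simp: reac_U_iff)
  have inv: "Inv s" unfolding s_eq using chain[OF r0 xs(2)] hs s_eq by simp
  have "\<exists>r2\<in>cl F. oplus s r2 \<in> zero_part (cl R) U"
    using inv unfolding Inv_def[of s]
  proof (elim disjE)
    assume "\<forall>k\<in>U. snd s k = 0" then show ?thesis using finish_none sR hs by blast
  next
    assume "\<exists>v\<in>U2. (\<forall>k\<in>U. snd s k = (if k = v then 1 else 0)) \<and> P2 v"
    then show ?thesis using finish2[OF E2 sR hs] by blast
  next
    assume "\<exists>u\<in>U1. (\<forall>k\<in>U. snd s k = (if k = u then 1 else 0)) \<and> Blk u"
    then obtain u where u: "u \<in> U1" "\<forall>k\<in>U. snd s k = (if k = u then 1 else 0)" "Blk u" by blast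
    obtain q0 q1 where q: "q0 \<in> prod_U R U1" "q1 \<in> cl F1"
       "\<forall>k\<in>U1. fst (oplus q0 q1) k = 0" "\<forall>k\<in>U. snd (oplus q0 q1) k = (if k = u then 1 else 0)"
      using u(3) unfolding Blk_def by blast
    have "oplus q0 q1 \<notin> reac_U (cl R) U1" using q(3) by (auto simp: reac_U_iff)
    then obtain r2 where r2: "r2 \<in> cl F1" "oplus (oplus q0 q1) r2 \<in> zero_part (cl R) U1"
      using E1 q(1,2) unfolding eliminable_def by blast
    have a1: "\<forall>k\<in>U1. fst r2 k = (if k = u then 1 else 0) \<and> snd r2 k = 0"
    proof
      fix k assume k: "k \<in> U1"
      have "fst (oplus (oplus q0 q1) r2) k = 0" "snd (oplus (oplus q0 q1) r2) k = 0"
        using r2(2) k by (auto simp: zero_part_iff)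
      moreover have "fst (oplus (oplus q0 q1) r2) k = fst (oplus q0 q1) k + (fst r2 k - snd (oplus q0 q1) k)"
        by (rule oplus_fst)
      moreover have "snd (oplus (oplus q0 q1) r2) k = snd r2 k + (snd (oplus q0 q1) k - fst r2 k)"
        by (rule oplus_snd)
      moreover have "fst (oplus q0 q1) k = 0" "snd (oplus q0 q1) k = (if k = u then 1 else 0)"
        using q(3,4) k by (auto simp del: oplus_fst oplus_snd)
      ultimately show "fst r2 k = (if k = u then 1 else 0) \<and> snd r2 k = 0"
        by (cases "k = u") (simp_all del: oplus_fst oplus_snd)
    qed
    have a2: "\<forall>k\<in>U2. fst r2 k = 0" using clF1_fstU2 r2(1) by blast
    obtain ys where ys: "r2 = foldl oplus zero_reaction ys" "set ys \<subseteq> F1" using r2(1) unfolding cl_def by blast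
    define s' where "s' = oplus s r2"
    have s'_eq: "s' = foldl oplus r0 (xs @ ys)" unfolding s'_def s_eq ys(1)
      by (simp add: foldl_oplus0[of "foldl oplus r0 xs" ys])
    have r2F: "r2 \<in> cl F" using r2(1) clF1_clF by blast
    have s'R: "s' \<in> cl R" unfolding s'_def using sR r2F clF_clR by (blast intro: cl_oplus)
    have hs': "\<forall>k\<in>U. fst s' k = 0"
    proof
      fix k assume k: "k \<in> U"
      show "fst s' k = 0"
      proof (cases "k \<in> U1")
        case True then show ?thesis unfolding s'_def using hs a1 u(2) k by simp
      next
        case False then show ?thesis unfolding s'_def using hs a2 k by simp
      qed
    qed
    have n1: "\<forall>k\<in>U1. snd s' k = 0" unfolding s'_def using a1 u(2) by simp
    have inv': "Inv s'" unfolding s'_eq using chain[OF r0, of "xs @ ys"] xs(2) ys(2) hs' s'_eq by auto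
    obtain r3 where r3: "r3 \<in> cl F" "oplus s' r3 \<in> zero_part (cl R) U"
      using fin[OF E2 s'R hs' inv' n1] by blast
    have "oplus r2 r3 \<in> cl F" using r2F r3(1) by (rule cl_oplus)
    moreover have "oplus s (oplus r2 r3) = oplus s' r3" unfolding s'_def by (simp add: oplus_assoc)
    ultimately show ?thesis using r3(2) by metis
  qed
  then show ?thesis unfolding s_def .
qed

end

theorem proposition4p10:
  fixes R F1 :: "('n::finite) reaction set" and U1 U2 :: "'n set"
  assumes "is_RN R"
    and "non_interacting R (U1 \<union> U2)"
    and "U1 \<inter> U2 = {}"
    and "F1 \<subseteq> reac_U R U1"
    and "eliminable R U1 F1"
    and "eliminable (reduced R U1 F1) U2 (reac_U (reduced R U1 F1) U2)"
  shows "eliminable R (U1 \<union> U2) (F1 \<union> reac_U R U2)"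
proof -
  interpret pf R F1 U1 U2 using assms(2,3,4) by unfold_locales
  show ?thesis unfolding eliminable_def using main[OF assms(5,6)] by blast
qed

end
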